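(* For each $n\ge1$, the number of connected spanning subgraphs of $\Sigma_n$ equals $H_n(1,2)=H_{2,n}(1,2)$, where, writing $H_2,N,M$ for $H_{2,n}(1,2),N_n(1,2),M_n(1,2)$, $$H_{2,n+1}(1,2)=4H_2^3+6H_2^2N,\qquad N_{n+1}(1,2)=H_2^3+8H_2^2N+H_2^2M+7H_2N^2,$$ $$M_{n+1}(1,2)=H_2^3+12H_2^2N+3H_2^2M+39H_2N^2+12H_2NM+14N^3,$$ with $H_{2,1}(1,2)=4$, $N_1(1,2)=M_1(1,2)=1$.
   Context: Graphs are finite. For a graph $G$, a spanning subgraph $A$ has vertex set $V(G)$ and edge set $E(A)\subseteq E(G)$; $k(A)$ is its number of components, $r(A)=|V(G)|-k(A)$, $n(A)=|E(A)|-r(A)$; the weight of $A$ is $(x-1)^{r(G)-r(A)}(y-1)^{n(A)}$ and the Tutte polynomial $T(G;x,y)$ is the sum of the weights of all spanning subgraphs. The graphs $\Sigma_n$ ($n\ge1$; Schreier graphs of the Hanoi Towers group $H^{(3)}$ with loops removed) each have three outmost vertices top, left, right: $\Sigma_1$ is the triangle $K_3$; $\Sigma_{n+1}$ is the disjoint union of three copies $G_1,G_2,G_3$ of $\Sigma_n$ together with three new edges joining left$(G_1)$ to top$(G_2)$, right$(G_1)$ to top$(G_3)$, and right$(G_2)$ to left$(G_3)$; its outmost vertices are top$(G_1)$, left$(G_2)$, right$(G_3)$. $H_n=T(\Sigma_n;x,y)$. $H_{2,n}$ (resp. $H_{1,n}$, $H_{0,n}$) is the sum of the weights of the spanning subgraphs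 of $\Sigma_n$ in which the three outmost vertices lie in one component (resp. left and right outmost in one component, top in another; resp. the three in three distinct components). $N_n=H_{1,n}/(x-1)$ and $M_n=H_{0,n}/(x-1)^2$, which are polynomials. *)

theory Defs
  imports Complex_Main
begin

definition adj :: "'a set set \<Rightarrow> ('a \<times> 'a) set" where
  "adj A = {(u, v). {u, v} \<in> A}"

definition ncomp :: "'a set \<Rightarrow> 'a set set \<Rightarrow> nat" where
  "ncomp V A = card (V // {(u, v). u \<in> V \<and> v \<in> V \<and> (u, v) \<in> (adj A)\<^sup>*})"

definition same_comp :: "'a set set \<Rightarrow> 'a \<Rightarrow> 'a \<Rightarrow> bool" where
  "same_comp A u v \<longleftrightarrow> (u, v) \<in> (adj A)\<^sup>*"

definition rk :: "'a set \<Rightarrow> 'a set set \<Rightarrow> nat" where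
  "rk V A = card V - ncomp V A"

definition nullity :: "'a set \<Rightarrow> 'a set set \<Rightarrow> nat" where
  "nullity V A = card A - rk V A"

definition tutte :: "'a set \<Rightarrow> 'a set set \<Rightarrow> real \<Rightarrow> real \<Rightarrow> real" where
  "tutte V E x y = (\<Sum>A\<in>Pow E. (x - 1) ^ (rk V E - rk V A) * (y - 1) ^ nullity V A)"

section \<open>The graphs Sigma_n (vertices are words over {0,1,2})\<close>

definition topv :: "nat \<Rightarrow> nat list" where "topv m = replicate m 0"
definition leftv :: "nat \<Rightarrow> nat list" where "leftv m = replicate m 1"
definition rightv :: "nat \<Rightarrow> nat list" where "rightv m = replicate m 2"

fun sigmaV :: "nat \<Rightarrow> nat list set" where
  "sigmaV 0 = {[]}"
| "sigmaV (Suc 0) = {[0], [1], [2]}"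
| "sigmaV (Suc (Suc n)) = (\<Union>i\<in>{0,1,2}. (\<lambda>w. i # w) ` sigmaV (Suc n))"

fun sigmaE :: "nat \<Rightarrow> nat list set set" where
  "sigmaE 0 = {}"
| "sigmaE (Suc 0) = {{[0], [1]}, {[0], [2]}, {[1], [2]}}"
| "sigmaE (Suc (Suc n)) =
     (\<Union>i\<in>{0,1,2}. (\<lambda>e. (\<lambda>w. i # w) ` e) ` sigmaE (Suc n))
     \<union> {{0 # leftv (Suc n), 1 # topv (Suc n)},
        {0 # rightv (Suc n), 2 # topv (Suc n)},
        {1 # rightv (Suc n), 2 # leftv (Suc n)}}"

text \<open>Outmost vertices of Sigma_n are topv n, leftv n, rightv n.\<close>

definition Hn :: "nat \<Rightarrow> real \<Rightarrow> real \<Rightarrow> real" where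
  "Hn n x y = tutte (sigmaV n) (sigmaE n) x y"

definition weight :: "nat \<Rightarrow> nat list set set \<Rightarrow> real \<Rightarrow> real \<Rightarrow> real" where
  "weight n A x y = (x - 1) ^ (rk (sigmaV n) (sigmaE n) - rk (sigmaV n) A) * (y - 1) ^ nullity (sigmaV n) A"

definition H2 :: "nat \<Rightarrow> real \<Rightarrow> real \<Rightarrow> real" where
  "H2 n x y = (\<Sum>A | A \<subseteq> sigmaE n \<and> same_comp A (topv n) (leftv n) \<and> same_comp A (topv n) (rightv n).
                 weight n A x y)"

definition H1 :: "nat \<Rightarrow> real \<Rightarrow> real \<Rightarrow> real" where
  "H1 n x y = (\<Sum>A | A \<subseteq> sigmaE n \<and> same_comp A (leftv n) (rightv n) \<and> \<not> same_comp A (topv n) (leftv n).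
                 weight n A x y)"

definition H0 :: "nat \<Rightarrow> real \<Rightarrow> real \<Rightarrow> real" where
  "H0 n x y = (\<Sum>A | A \<subseteq> sigmaE n \<and> \<not> same_comp A (leftv n) (rightv n)
                 \<and> \<not> same_comp A (topv n) (leftv n) \<and> \<not> same_comp A (topv n) (rightv n).
                 weight n A x y)"

text \<open>N_n = H_{1,n}/(x-1) and M_n = H_{0,n}/(x-1)^2 as polynomials: in each summand of
  H_{1,n} (resp. H_{0,n}) the exponent of (x-1) is at least 1 (resp. 2), so the quotient
  polynomial is obtained by lowering that exponent by 1 (resp. 2).\<close>
definition Nn :: "nat \<Rightarrow> real \<Rightarrow> real \<Rightarrow> real" where
  "Nn n x y = (\<Sum>A | A \<subseteq> sigmaE n \<and> same_comp A (leftv n) (rightv n) \<and> \<not> same_comp A (topv n) (leftv n).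
     (x - 1) ^ (rk (sigmaV n) (sigmaE n) - rk (sigmaV n) A - 1) * (y - 1) ^ nullity (sigmaV n) A)"

definition Mn :: "nat \<Rightarrow> real \<Rightarrow> real \<Rightarrow> real" where
  "Mn n x y = (\<Sum>A | A \<subseteq> sigmaE n \<and> \<not> same_comp A (leftv n) (rightv n)
                 \<and> \<not> same_comp A (topv n) (leftv n) \<and> \<not> same_comp A (topv n) (rightv n).
     (x - 1) ^ (rk (sigmaV n) (sigmaE n) - rk (sigmaV n) A - 2) * (y - 1) ^ nullity (sigmaV n) A)"

end

theory Submission
  imports Defs
begin


definition cor :: "nat \<Rightarrow> nat \<Rightarrow> nat list" where "cor n c = replicate n c"

definition br :: "nat \<Rightarrow> nat list set set" where
  "br n = {{0 # cor n 1, 1 # cor n 0}, {0 # cor n 2, 2 # cor n 0}, {1 # cor n 2, 2 # cor n 1}}"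

lemma sigmaV_Suc: "sigmaV (Suc n) = (\<Union>i\<in>{0,1,2}. Cons i ` sigmaV n)"
  by (cases n) auto

lemma sigmaE_Suc: "sigmaE (Suc n) = (\<Union>i\<in>{0,1,2}. image (Cons i) ` sigmaE n) \<union> br n"
  by (cases n) (auto simp: br_def cor_def topv_def leftv_def rightv_def)

lemma cor_in: "c < 3 \<Longrightarrow> cor n c \<in> sigmaV n"
proof (induction n)
  case 0 then show ?case by (simp add: cor_def)
next
  case (Suc n)
  have "cor (Suc n) c = c # cor n c" by (simp add: cor_def)
  moreover have "c \<in> {0,1,2}" using Suc.prems by auto
  ultimately show ?case using Suc by (auto simp: sigmaV_Suc)
qed

lemma edge_ne: "e \<in> sigmaE n \<Longrightarrow> e \<noteq> {}"
proof (induction n arbitrary: e)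
  case 0 then show ?case by simp
next
  case (Suc n) then show ?case by (auto simp: sigmaE_Suc br_def)
qed

lemma adj_iff: "(u, v) \<in> adj A \<longleftrightarrow> {u, v} \<in> A" by (simp add: adj_def)

lemma adj_sym: "(u, v) \<in> adj A \<Longrightarrow> (v, u) \<in> adj A"
  by (simp add: adj_def insert_commute)

lemma sc_sym: "same_comp A u v \<Longrightarrow> same_comp A v u"
  unfolding same_comp_def
proof (induction rule: rtrancl_induct)
  case base then show ?case by simp
next
  case (step y z) then show ?case by (meson adj_sym converse_rtrancl_into_rtrancl)
qed

lemma sc_trans: "same_comp A u v \<Longrightarrow> same_comp A v w \<Longrightarrow> same_comp A u w"
  unfolding same_comp_def by (rule rtrancl_trans)

lemma sc_refl[simp]: "same_comp A u u" by (simp add: same_comp_def)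

lemma sc_edge: "{u, v} \<in> A \<Longrightarrow> same_comp A u v"
  unfolding same_comp_def by (simp add: adj_iff r_into_rtrancl)

definition Ai :: "nat list set set \<Rightarrow> nat \<Rightarrow> nat \<Rightarrow> nat list set set" where
  "Ai A n i = {e \<in> sigmaE n. image (Cons i) e \<in> A}"

lemma lift: "same_comp (Ai A n i) u v \<Longrightarrow> same_comp A (i # u) (i # v)"
  unfolding same_comp_def
proof (induction rule: rtrancl_induct)
  case base then show ?case by simp
next
  case (step y z)
  then have "{y, z} \<in> Ai A n i" by (simp add: adj_iff)
  then have "{i # y, i # z} \<in> A" by (simp add: Ai_def)
  then show ?case using step by (meson adj_iff rtrancl_into_rtrancl)
qed

lemma edge_class:
  assumes "A \<subseteq> sigmaE (Suc n)" "{x, y} \<in> A"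
  shows "(\<exists>i u v. i < 3 \<and> x = i # u \<and> y = i # v \<and> {u, v} \<in> Ai A n i)
       \<or> (\<exists>i j. i < 3 \<and> j < 3 \<and> i \<noteq> j \<and> x = i # cor n j \<and> y = j # cor n i)"
proof -
  have "{x, y} \<in> sigmaE (Suc n)" using assms by auto
  then consider (int) i e where "i \<in> {0,1,2}" "e \<in> sigmaE n" "{x, y} = Cons i ` e"
    | (b) "{x, y} \<in> br n"
    unfolding sigmaE_Suc by blast
  then show ?thesis
  proof cases
    case int
    have "x \<in> Cons i ` e" "y \<in> Cons i ` e" using int(3) by auto
    then obtain u v where uv: "u \<in> e" "v \<in> e" "x = i # u" "y = i # v" by auto
    then have "Cons i ` {u, v} = Cons i ` e" using int(3) by auto
    moreover have "inj (Cons i)" by (rule injI) simp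
    ultimately have "e = {u, v}" using inj_image_eq_iff by metis
    then have "{u, v} \<in> Ai A n i" using int assms(2) by (simp add: Ai_def)
    then show ?thesis using uv int(1) by auto
  next
    case b
    then show ?thesis unfolding br_def by (auto simp: doubleton_eq_iff)
  qed
qed


definition Sm :: "nat list set set \<Rightarrow> nat \<Rightarrow> ((nat \<times> nat) \<times> (nat \<times> nat)) set" where
  "Sm A n = {((i, c), (i, d)) | i c d. i < 3 \<and> c < 3 \<and> d < 3 \<and> same_comp (Ai A n i) (cor n c) (cor n d)}
          \<union> {((i, j), (j, i)) | i j. i < 3 \<and> j < 3 \<and> i \<noteq> j \<and> {i # cor n j, j # cor n i} \<in> A}"

lemma small_fwd:
  assumes A: "A \<subseteq> sigmaE (Suc n)" and "same_comp A (i # cor n c) x" "i < 3" "c < 3"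
  shows "\<exists>j d w. j < 3 \<and> d < 3 \<and> x = j # w \<and> ((i, c), (j, d)) \<in> (Sm A n)\<^sup>*
           \<and> same_comp (Ai A n j) (cor n d) w"
  using assms(2) unfolding same_comp_def[of A]
proof (induction rule: rtrancl_induct)
  case base
  show ?case apply (rule exI[of _ i], rule exI[of _ c], rule exI[of _ "cor n c"]) using assms(3,4) by simp
next
  case (step y z)
  then obtain j d w where IH: "j < 3" "d < 3" "y = j # w" "((i, c), (j, d)) \<in> (Sm A n)\<^sup>*"
      "same_comp (Ai A n j) (cor n d) w" by blast
  have e: "{y, z} \<in> A" using step(2) by (simp add: adj_iff)
  from edge_class[OF A e] show ?case
  proof
    assume "\<exists>i u v. i < 3 \<and> y = i # u \<and> z = i # v \<and> {u, v} \<in> Ai A n i"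
    then obtain u v where "y = j # u" "z = j # v" "{u, v} \<in> Ai A n j" using IH(3) by auto
    then have "same_comp (Ai A n j) (cor n d) v" using IH(3,5) sc_edge sc_trans by fastforce
    then show ?thesis using IH \<open>z = j # v\<close> by blast
  next
    assume "\<exists>i' j'. i' < 3 \<and> j' < 3 \<and> i' \<noteq> j' \<and> y = i' # cor n j' \<and> z = j' # cor n i'"
    then obtain j' where j': "j' < 3" "j \<noteq> j'" "w = cor n j'" "z = j' # cor n j" using IH(3) by auto
    have "((j, d), (j, j')) \<in> Sm A n" using IH j' unfolding Sm_def by auto
    moreover have "((j, j'), (j', j)) \<in> Sm A n" using IH j' e unfolding Sm_def by auto
    ultimately have "((i, c), (j', j)) \<in> (Sm A n)\<^sup>*" using IH(4)
      by (meson rtrancl.rtrancl_into_rtrancl)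
    moreover have "same_comp (Ai A n j') (cor n j) (cor n j)" by simp
    ultimately show ?thesis using j' IH(1) by blast
  qed
qed

lemma small_bwd:
  assumes "((i, c), (j, d)) \<in> (Sm A n)\<^sup>*"
  shows "same_comp A (i # cor n c) (j # cor n d)"
  using assms
proof (induction rule: rtrancl_induct2)
  case refl then show ?case by simp
next
  case (step a b a' b')
  from step(2) have "same_comp A (a # cor n b) (a' # cor n b')"
    unfolding Sm_def by (auto intro: lift sc_edge)
  then show ?case by (rule sc_trans[OF step(3)])
qed

lemma small_iff:
  assumes "A \<subseteq> sigmaE (Suc n)" "i < 3" "c < 3" "j < 3" "d < 3"
  shows "same_comp A (i # cor n c) (j # cor n d) \<longleftrightarrow> ((i, c), (j, d)) \<in> (Sm A n)\<^sup>*"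
proof
  assume "same_comp A (i # cor n c) (j # cor n d)"
  from small_fwd[OF assms(1) this assms(2,3)] obtain d' where
    "d' < 3" "((i, c), (j, d')) \<in> (Sm A n)\<^sup>*" "same_comp (Ai A n j) (cor n d') (cor n d)" by auto
  moreover have "((j, d'), (j, d)) \<in> Sm A n" using calculation assms unfolding Sm_def by auto
  ultimately show "((i, c), (j, d)) \<in> (Sm A n)\<^sup>*" by auto
qed (rule small_bwd)

lemma exit_lemma:
  assumes A: "A \<subseteq> sigmaE (Suc n)" and "same_comp A (i # v) x"
  shows "(\<exists>c < 3. same_comp (Ai A n i) v (cor n c)) \<or> (\<exists>w. x = i # w \<and> same_comp (Ai A n i) v w)"
  using assms(2) unfolding same_comp_def[of A]
proof (induction rule: rtrancl_induct)
  case base then show ?case by auto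
next
  case (step y z)
  show ?case
  proof (cases "\<exists>c < 3. same_comp (Ai A n i) v (cor n c)")
    case False
    then obtain w where w: "y = i # w" "same_comp (Ai A n i) v w" using step(3) by auto
    have e: "{y, z} \<in> A" using step(2) by (simp add: adj_iff)
    from edge_class[OF A e] show ?thesis
    proof
      assume "\<exists>i u v. i < 3 \<and> y = i # u \<and> z = i # v \<and> {u, v} \<in> Ai A n i"
      then obtain u' where "z = i # u'" "{w, u'} \<in> Ai A n i" using w(1) by auto
      then show ?thesis using w sc_edge sc_trans by metis
    next
      assume "\<exists>i' j'. i' < 3 \<and> j' < 3 \<and> i' \<noteq> j' \<and> y = i' # cor n j' \<and> z = j' # cor n i'"
      then obtain j' where "j' < 3" "w = cor n j'" using w(1) by auto
      then show ?thesis using w False by auto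
    qed
  qed simp
qed

lemma Suc_mem: "i < 3 \<Longrightarrow> v \<in> sigmaV n \<Longrightarrow> i # v \<in> sigmaV (Suc n)"
proof -
  assume "i < 3" "v \<in> sigmaV n"
  moreover have "i \<in> {0,1,2}" using \<open>i < 3\<close> by auto
  ultimately show ?thesis unfolding sigmaV_Suc by blast
qed

definition good :: "nat \<Rightarrow> nat list set set \<Rightarrow> bool" where
  "good n A \<longleftrightarrow> (\<forall>v\<in>sigmaV n. \<exists>c<3. same_comp A (cor n c) v)"

lemma cor_Suc: "cor (Suc n) c = c # cor n c" by (simp add: cor_def)

lemma good_Suc:
  assumes A: "A \<subseteq> sigmaE (Suc n)"
  shows "good (Suc n) A \<longleftrightarrow> (\<forall>i<3. good n (Ai A n i)) \<and>
           (\<forall>i<3. \<forall>c<3. \<exists>g<3. ((i, c), (g, g)) \<in> (Sm A n)\<^sup>*)"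
proof
  assume g: "good (Suc n) A"
  have "good n (Ai A n i)" if "i < 3" for i
    unfolding good_def
  proof
    fix v assume v: "v \<in> sigmaV n"
    then have "i # v \<in> sigmaV (Suc n)" using that by (simp add: Suc_mem)
    then obtain c' where c': "c' < 3" "same_comp A (cor (Suc n) c') (i # v)" using g by (auto simp: good_def)
    then have "same_comp A (i # v) (c' # cor n c')" by (simp add: cor_Suc sc_sym)
    from exit_lemma[OF A this] have "\<exists>c<3. same_comp (Ai A n i) v (cor n c)" using c'(1) by auto
    then obtain c where "c < 3" "same_comp (Ai A n i) v (cor n c)" by blast
    then have "c < 3 \<and> same_comp (Ai A n i) (cor n c) v" by (simp add: sc_sym)
    then show "\<exists>c<3. same_comp (Ai A n i) (cor n c) v" by blast
  qed
  moreover have "\<exists>g<3. ((i, c), (g, g)) \<in> (Sm A n)\<^sup>*" if "i < 3" "c < 3" for i c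
  proof -
    have "i # cor n c \<in> sigmaV (Suc n)" using that cor_in by (simp add: Suc_mem)
    then obtain g where "g < 3" "same_comp A (cor (Suc n) g) (i # cor n c)" using g by (auto simp: good_def)
    then have "same_comp A (i # cor n c) (g # cor n g)" by (simp add: cor_Suc sc_sym)
    then show ?thesis using small_iff[OF A that \<open>g < 3\<close> \<open>g < 3\<close>] \<open>g < 3\<close> by blast
  qed
  ultimately show "(\<forall>i<3. good n (Ai A n i)) \<and> (\<forall>i<3. \<forall>c<3. \<exists>g<3. ((i, c), (g, g)) \<in> (Sm A n)\<^sup>*)"
    by blast
next
  assume h: "(\<forall>i<3. good n (Ai A n i)) \<and> (\<forall>i<3. \<forall>c<3. \<exists>g<3. ((i, c), (g, g)) \<in> (Sm A n)\<^sup>*)"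
  show "good (Suc n) A" unfolding good_def
  proof
    fix v assume "v \<in> sigmaV (Suc n)"
    then obtain i v' where iv: "i < 3" "v = i # v'" "v' \<in> sigmaV n" by (auto simp: sigmaV_Suc)
    have "good n (Ai A n i)" using h iv(1) by blast
    then obtain c where c: "c < 3" "same_comp (Ai A n i) (cor n c) v'" using iv(3) unfolding good_def by blast
    obtain g where g: "g < 3" "((i, c), (g, g)) \<in> (Sm A n)\<^sup>*" using h iv c by blast
    have "same_comp A (g # cor n g) (i # cor n c)" using small_bwd[OF g(2)] by (rule sc_sym)
    moreover have "same_comp A (i # cor n c) v" using lift[OF c(2)] iv by simp
    ultimately have "same_comp A (cor (Suc n) g) v" unfolding cor_Suc by (rule sc_trans)
    then show "\<exists>c<3. same_comp A (cor (Suc n) c) v" using g(1) by blast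
  qed
qed



definition canon :: "bool \<Rightarrow> bool \<Rightarrow> bool \<Rightarrow> nat list" where
  "canon a b c = [0, if a then 0 else 1, if b then 0 else if c then 1 else 2]"

lemma lt3: "(i::nat) < 3 \<longleftrightarrow> i = 0 \<or> i = 1 \<or> i = 2" by auto

lemma all3: "(\<forall>i<(3::nat). Q i) \<longleftrightarrow> Q 0 \<and> Q 1 \<and> Q 2"
proof
  assume "\<forall>i<(3::nat). Q i" then show "Q 0 \<and> Q 1 \<and> Q 2" by simp
next
  assume q: "Q 0 \<and> Q 1 \<and> Q 2"
  show "\<forall>i<(3::nat). Q i"
  proof (intro allI impI)
    fix i :: nat assume "i < 3" then have "i = 0 \<or> i = 1 \<or> i = 2" by auto
    then show "Q i" using q by auto
  qed
qed

lemma ex3: "(\<exists>i<(3::nat). Q i) \<longleftrightarrow> Q 0 \<or> Q 1 \<or> Q 2"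
  using all3[of "\<lambda>i. \<not> Q i"] by auto

lemma canon_eq:
  fixes R :: "nat \<Rightarrow> nat \<Rightarrow> bool"
  assumes refl: "\<And>a. R a a" and sym: "\<And>a b. R a b \<Longrightarrow> R b a"
    and trans: "\<And>a b c. R a b \<Longrightarrow> R b c \<Longrightarrow> R a c" and ab: "a < 3" "b < 3"
  shows "(canon (R 0 1) (R 0 2) (R 1 2) ! a = canon (R 0 1) (R 0 2) (R 1 2) ! b) \<longleftrightarrow> R a b"
proof -
  have s: "R 1 0 = R 0 1" "R 2 0 = R 0 2" "R 2 1 = R 1 2" using sym by blast+
  have t: "R 0 1 \<Longrightarrow> R 1 2 \<Longrightarrow> R 0 2" "R 0 1 \<Longrightarrow> R 0 2 \<Longrightarrow> R 1 2" "R 0 2 \<Longrightarrow> R 1 2 \<Longrightarrow> R 0 1"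
    using trans sym by blast+
  have r: "R 0 0" "R 1 1" "R 2 2" using refl by blast+
  from ab show ?thesis unfolding lt3 using s t r
    by (elim disjE) (auto simp: canon_def)
qed

definition ty :: "nat \<Rightarrow> nat list set set \<Rightarrow> nat list option" where
  "ty n A = (if good n A then Some (canon (same_comp A (cor n 0) (cor n 1))
       (same_comp A (cor n 0) (cor n 2)) (same_comp A (cor n 1) (cor n 2))) else None)"

lemma ty_eq:
  assumes "ty n A = Some t" "c < 3" "d < 3"
  shows "t ! c = t ! d \<longleftrightarrow> same_comp A (cor n c) (cor n d)"
proof -
  have t: "t = canon (same_comp A (cor n 0) (cor n 1))
       (same_comp A (cor n 0) (cor n 2)) (same_comp A (cor n 1) (cor n 2))"
    using assms(1) by (simp add: ty_def split: if_splits)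
  show ?thesis unfolding t
    by (rule canon_eq[where R = "\<lambda>a b. same_comp A (cor n a) (cor n b)"])
       (auto intro: sc_sym sc_trans assms(2,3))
qed

definition merge :: "('a \<Rightarrow> 'b) \<Rightarrow> 'a \<Rightarrow> 'a \<Rightarrow> 'a \<Rightarrow> 'b" where
  "merge L u v x = (if L x = L v then L u else L x)"

lemma merge_ok:
  assumes H: "\<forall>x y. L x = L y \<longleftrightarrow> (x, y) \<in> R\<^sup>*"
  shows "\<forall>x y. merge L u v x = merge L u v y \<longleftrightarrow> (x, y) \<in> (R \<union> {(u, v), (v, u)})\<^sup>*"
proof (intro allI iffI)
  let ?R = "R \<union> {(u, v), (v, u)}"
  have sub: "(a, b) \<in> R\<^sup>* \<Longrightarrow> (a, b) \<in> ?R\<^sup>*" for a b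
    by (meson Un_upper1 rtrancl_mono subsetD)
  have uv: "(u, v) \<in> ?R\<^sup>*" "(v, u) \<in> ?R\<^sup>*" by auto
  fix x y
  show "(x, y) \<in> ?R\<^sup>* \<Longrightarrow> merge L u v x = merge L u v y"
  proof (induction rule: rtrancl_induct)
    case base then show ?case by simp
  next
    case (step y z)
    have "merge L u v y = merge L u v z"
    proof (cases "(y, z) \<in> R")
      case True
      then have "L y = L z" using H by auto
      then show ?thesis by (simp add: merge_def)
    next
      case False
      then have "(y, z) = (u, v) \<or> (y, z) = (v, u)" using step(2) by auto
      then show ?thesis by (auto simp: merge_def)
    qed
    then show ?case using step(3) by simp
  qed
  assume m: "merge L u v x = merge L u v y"
  show "(x, y) \<in> ?R\<^sup>*"
  proof (cases "L x = L v")
    case xv: True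
    show ?thesis
    proof (cases "L y = L v")
      case True
      then have "(x, y) \<in> R\<^sup>*" using xv H by metis
      then show ?thesis by (rule sub)
    next
      case False
      then have "L u = L y" using m xv by (simp add: merge_def)
      then have "(x, v) \<in> R\<^sup>*" "(u, y) \<in> R\<^sup>*" using H xv by metis+
      then show ?thesis using sub uv(2) by (meson rtrancl_trans)
    qed
  next
    case xv: False
    show ?thesis
    proof (cases "L y = L v")
      case True
      then have "L x = L u" using m xv by (simp add: merge_def)
      then have "(x, u) \<in> R\<^sup>*" "(v, y) \<in> R\<^sup>*" using H True by metis+
      then show ?thesis using sub uv(1) by (meson rtrancl_trans)
    next
      case False
      then have "L x = L y" using m xv by (simp add: merge_def)
      then show ?thesis using H sub by metis
    qed
  qed
qed

definition mg :: "bool \<Rightarrow> 'a \<Rightarrow> 'a \<Rightarrow> ('a \<Rightarrow> 'b) \<Rightarrow> 'a \<Rightarrow> 'b" where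
  "mg b u v L = (if b then merge L u v else L)"

definition Rb :: "bool \<Rightarrow> 'a \<Rightarrow> 'a \<Rightarrow> ('a \<times> 'a) set \<Rightarrow> ('a \<times> 'a) set" where
  "Rb b u v R = (if b then R \<union> {(u, v), (v, u)} else R)"

lemma mg_ok:
  assumes "\<forall>x y. L x = L y \<longleftrightarrow> (x, y) \<in> R\<^sup>*"
  shows "\<forall>x y. mg b u v L x = mg b u v L y \<longleftrightarrow> (x, y) \<in> (Rb b u v R)\<^sup>*"
  using merge_ok[OF assms] assms by (simp add: mg_def Rb_def)

definition L0 :: "nat list list \<Rightarrow> nat \<times> nat \<Rightarrow> nat \<times> nat" where
  "L0 ts x = (case x of (i, c) \<Rightarrow> if i < 3 \<and> c < 3 then (i, ts ! i ! c) else (i + 3, c))"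

definition S0 :: "nat list set set \<Rightarrow> nat \<Rightarrow> ((nat \<times> nat) \<times> (nat \<times> nat)) set" where
  "S0 A n = {((i, c), (i, d)) | i c d. i < 3 \<and> c < 3 \<and> d < 3 \<and> same_comp (Ai A n i) (cor n c) (cor n d)}"

lemma L0_ok:
  assumes ts: "\<forall>i<3. ty n (Ai A n i) = Some (ts ! i)"
  shows "\<forall>x y. L0 ts x = L0 ts y \<longleftrightarrow> (x, y) \<in> (S0 A n)\<^sup>*"
proof (intro allI iffI)
  fix x y
  assume h: "L0 ts x = L0 ts y"
  obtain i c j d where xy: "x = (i, c)" "y = (j, d)" by fastforce
  show "(x, y) \<in> (S0 A n)\<^sup>*"
  proof (cases "i < 3 \<and> c < 3")
    case True
    then have "j < 3 \<and> d < 3" using h xy by (auto simp: L0_def split: if_splits)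
    then have "i = j" "ts ! i ! c = ts ! i ! d" using h xy True by (auto simp: L0_def)
    then have "same_comp (Ai A n i) (cor n c) (cor n d)"
      using ty_eq[of n "Ai A n i" "ts ! i" c d] ts True \<open>j < 3 \<and> d < 3\<close> by auto
    then have "(x, y) \<in> S0 A n" using xy True \<open>j < 3 \<and> d < 3\<close> \<open>i = j\<close> unfolding S0_def by auto
    then show ?thesis by auto
  next
    case False
    then have "\<not> (j < 3 \<and> d < 3)" using h xy by (auto simp: L0_def split: if_splits)
    then have "x = y" using h xy False by (auto simp: L0_def)
    then show ?thesis by simp
  qed
next
  fix x y
  show "(x, y) \<in> (S0 A n)\<^sup>* \<Longrightarrow> L0 ts x = L0 ts y"
  proof (induction rule: rtrancl_induct)
    case base then show ?case by simp
  next
    case (step y z)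
    then obtain i c d where e: "y = (i, c)" "z = (i, d)" "i < 3" "c < 3" "d < 3"
      "same_comp (Ai A n i) (cor n c) (cor n d)" unfolding S0_def by blast
    then have "ts ! i ! c = ts ! i ! d" using ty_eq[of n "Ai A n i" "ts ! i" c d] ts by auto
    then show ?case using step(3) e by (simp add: L0_def)
  qed
qed

definition bb :: "nat list set set \<Rightarrow> nat \<Rightarrow> nat \<Rightarrow> nat \<Rightarrow> bool" where
  "bb A n i j \<longleftrightarrow> {i # cor n j, j # cor n i} \<in> A"

lemma Sm_eq: "Sm A n = Rb (bb A n 1 2) (1, 2) (2, 1) (Rb (bb A n 0 2) (0, 2) (2, 0)
                      (Rb (bb A n 0 1) (0, 1) (1, 0) (S0 A n)))"
  unfolding Sm_def S0_def Rb_def bb_def lt3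
  by (auto simp: insert_commute)

definition Lfin :: "nat list list \<Rightarrow> bool \<Rightarrow> bool \<Rightarrow> bool \<Rightarrow> nat \<times> nat \<Rightarrow> nat \<times> nat" where
  "Lfin ts b01 b02 b12 = mg b12 (1, 2) (2, 1) (mg b02 (0, 2) (2, 0) (mg b01 (0, 1) (1, 0) (L0 ts)))"

lemma Lfin_ok:
  assumes ts: "\<forall>i<3. ty n (Ai A n i) = Some (ts ! i)"
  shows "\<forall>x y. Lfin ts (bb A n 0 1) (bb A n 0 2) (bb A n 1 2) x = Lfin ts (bb A n 0 1) (bb A n 0 2) (bb A n 1 2) y
            \<longleftrightarrow> (x, y) \<in> (Sm A n)\<^sup>*"
  unfolding Lfin_def Sm_eq by (intro mg_ok L0_ok[OF ts])

definition smallv :: "(nat \<times> nat) list" where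
  "smallv = [(0,0),(0,1),(0,2),(1,0),(1,1),(1,2),(2,0),(2,1),(2,2)]"

definition comb :: "nat list list \<Rightarrow> bool \<Rightarrow> bool \<Rightarrow> bool \<Rightarrow> nat list option" where
  "comb ts b01 b02 b12 = (let L = Lfin ts b01 b02 b12 in
     if (\<forall>x\<in>set smallv. L x = L (0,0) \<or> L x = L (1,1) \<or> L x = L (2,2))
     then Some (canon (L (0,0) = L (1,1)) (L (0,0) = L (2,2)) (L (1,1) = L (2,2))) else None)"

definition combo :: "nat list option \<Rightarrow> nat list option \<Rightarrow> nat list option \<Rightarrow> bool \<Rightarrow> bool \<Rightarrow> bool \<Rightarrow> nat list option" where
  "combo o0 o1 o2 b01 b02 b12 = (case (o0, o1, o2) of (Some t0, Some t1, Some t2) \<Rightarrow> comb [t0, t1, t2] b01 b02 b12 | _ \<Rightarrow> None)"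

lemma smallv_iff: "(\<forall>x\<in>set smallv. P x) \<longleftrightarrow> (\<forall>i<3. \<forall>c<3. P (i, c))"
  by (simp add: smallv_def all3)

lemma ty_Suc:
  assumes A: "A \<subseteq> sigmaE (Suc n)"
  shows "ty (Suc n) A = combo (ty n (Ai A n 0)) (ty n (Ai A n 1)) (ty n (Ai A n 2))
                               (bb A n 0 1) (bb A n 0 2) (bb A n 1 2)"
proof (cases "\<forall>i<3. good n (Ai A n i)")
  case False
  then have "\<not> good (Suc n) A" using good_Suc[OF A] by blast
  moreover have "ty n (Ai A n 0) = None \<or> ty n (Ai A n 1) = None \<or> ty n (Ai A n 2) = None"
    using False unfolding lt3 ty_def by auto
  ultimately show ?thesis by (auto simp: ty_def combo_def split: option.splits)
next
  case True
  define ts where "ts = [the (ty n (Ai A n 0)), the (ty n (Ai A n 1)), the (ty n (Ai A n 2))]"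
  have tsok: "\<forall>i<3. ty n (Ai A n i) = Some (ts ! i)"
    using True unfolding lt3 ts_def ty_def by auto
  define L where "L = Lfin ts (bb A n 0 1) (bb A n 0 2) (bb A n 1 2)"
  have Lok: "\<forall>x y. L x = L y \<longleftrightarrow> (x, y) \<in> (Sm A n)\<^sup>*" unfolding L_def by (rule Lfin_ok[OF tsok])
  have sc: "same_comp A (cor (Suc n) a) (cor (Suc n) b) \<longleftrightarrow> L (a, a) = L (b, b)" if "a < 3" "b < 3" for a b
    unfolding cor_Suc using small_iff[OF A that(1) that(1) that(2) that(2)] Lok by simp
  have g: "good (Suc n) A \<longleftrightarrow> (\<forall>x\<in>set smallv. L x = L (0,0) \<or> L x = L (1,1) \<or> L x = L (2,2))"
    unfolding good_Suc[OF A] smallv_iff using True Lok by (simp add: all3 ex3)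
  have c: "combo (ty n (Ai A n 0)) (ty n (Ai A n 1)) (ty n (Ai A n 2)) (bb A n 0 1) (bb A n 0 2) (bb A n 1 2)
      = comb ts (bb A n 0 1) (bb A n 0 2) (bb A n 1 2)"
  proof -
    have "ty n (Ai A n 0) = Some (ts!0)" "ty n (Ai A n 1) = Some (ts!1)" "ty n (Ai A n 2) = Some (ts!2)"
      using tsok by (simp_all add: all3)
    then have "combo (ty n (Ai A n 0)) (ty n (Ai A n 1)) (ty n (Ai A n 2)) (bb A n 0 1) (bb A n 0 2) (bb A n 1 2)
      = comb [ts!0, ts!1, ts!2] (bb A n 0 1) (bb A n 0 2) (bb A n 1 2)" unfolding combo_def by simp
    moreover have "[ts!0, ts!1, ts!2] = ts" by (simp add: ts_def)
    ultimately show ?thesis by simp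
  qed
  have "ty (Suc n) A = comb ts (bb A n 0 1) (bb A n 0 2) (bb A n 1 2)"
    unfolding comb_def ty_def[of "Suc n" A] Let_def L_def[symmetric] g
    using sc[of 0 1] sc[of 0 2] sc[of 1 2] by simp
  then show ?thesis using c by simp
qed



definition bre :: "nat \<Rightarrow> nat \<Rightarrow> nat \<Rightarrow> nat list set" where
  "bre n i j = {i # cor n j, j # cor n i}"

definition F :: "nat \<Rightarrow> nat list set set \<times> nat list set set \<times> nat list set set \<times> bool \<times> bool \<times> bool
                 \<Rightarrow> nat list set set" where
  "F n x = (case x of (A0, A1, A2, b01, b02, b12) \<Rightarrow>
     image (Cons 0) ` A0 \<union> image (Cons 1) ` A1 \<union> image (Cons 2) ` A2 \<union>
     (if b01 then {bre n 0 1} else {}) \<union> (if b02 then {bre n 0 2} else {}) \<union> (if b12 then {bre n 1 2} else {}))"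

definition D :: "nat \<Rightarrow> (nat list set set \<times> nat list set set \<times> nat list set set \<times> bool \<times> bool \<times> bool) set" where
  "D n = Pow (sigmaE n) \<times> Pow (sigmaE n) \<times> Pow (sigmaE n) \<times> UNIV"

lemma img_eq: "e \<noteq> {} \<Longrightarrow> Cons i ` e = Cons j ` e' \<Longrightarrow> i = j \<and> e = e'"
proof -
  assume ne: "e \<noteq> {}" and eq: "Cons i ` e = Cons j ` e'"
  then obtain u where "u \<in> e" by auto
  then have "i # u \<in> Cons j ` e'" using eq by auto
  then have ij: "i = j" by auto
  have "inj (Cons i)" by (rule injI) simp
  then show ?thesis using eq ij by (simp add: inj_image_eq_iff)
qed

lemma img_not_bre: "e \<noteq> {} \<Longrightarrow> i \<noteq> j \<Longrightarrow> Cons k ` e \<noteq> bre n i j"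
proof
  assume "e \<noteq> {}" "i \<noteq> j" "Cons k ` e = bre n i j"
  then have "i # cor n j \<in> Cons k ` e" "j # cor n i \<in> Cons k ` e" by (auto simp: bre_def)
  then show False using \<open>i \<noteq> j\<close> by auto
qed

lemma bre_ne: "bre n 0 1 \<noteq> bre n 0 2" "bre n 0 1 \<noteq> bre n 1 2" "bre n 0 2 \<noteq> bre n 1 2"
  by (auto simp: bre_def doubleton_eq_iff)

lemma Ai_F:
  assumes "x \<in> D n" "i \<in> {0,1,2}"
  shows "Ai (F n x) n i = (case x of (A0, A1, A2, _) \<Rightarrow> [A0, A1, A2] ! i)"
proof -
  obtain A0 A1 A2 b01 b02 b12 where x: "x = (A0, A1, A2, b01, b02, b12)" by (cases x) auto
  have sub: "A0 \<subseteq> sigmaE n" "A1 \<subseteq> sigmaE n" "A2 \<subseteq> sigmaE n" using assms x by (auto simp: D_def)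
  have key: "Cons i ` e \<in> F n x \<longleftrightarrow> e \<in> [A0, A1, A2] ! i" if e: "e \<in> sigmaE n" for e
  proof -
    have ne: "e \<noteq> {}" using edge_ne e by blast
    have b: "Cons i ` e \<noteq> bre n 0 1" "Cons i ` e \<noteq> bre n 0 2" "Cons i ` e \<noteq> bre n 1 2"
      using img_not_bre[OF ne] by auto
    have "Cons i ` e \<in> image (Cons j) ` B \<longleftrightarrow> i = j \<and> e \<in> B" for j B
      using img_eq[OF ne] by blast
    then show ?thesis using assms(2) b unfolding x F_def by auto
  qed
  show ?thesis unfolding x Ai_def using key sub assms(2) by (auto simp: x)
qed

lemma in_F:
  assumes "A0 \<subseteq> sigmaE n" "A1 \<subseteq> sigmaE n" "A2 \<subseteq> sigmaE n" "i \<noteq> j"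
  shows "bre n i j \<in> F n (A0, A1, A2, b01, b02, b12) \<longleftrightarrow>
     (bre n i j = bre n 0 1 \<and> b01) \<or> (bre n i j = bre n 0 2 \<and> b02) \<or> (bre n i j = bre n 1 2 \<and> b12)"
proof -
  have nb: "bre n i j \<notin> image (Cons k) ` B" if "B \<subseteq> sigmaE n" for k B
  proof
    assume "bre n i j \<in> image (Cons k) ` B"
    then obtain e where "e \<in> B" "bre n i j = Cons k ` e" by blast
    moreover have "e \<noteq> {}" using edge_ne \<open>e \<in> B\<close> that by blast
    ultimately show False using img_not_bre[OF _ assms(4)] by metis
  qed
  show ?thesis unfolding F_def using nb[OF assms(1)] nb[OF assms(2)] nb[OF assms(3)] by auto
qed

lemma bb_F:
  assumes "x = (A0, A1, A2, b01, b02, b12)" "x \<in> D n"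
  shows "bb (F n x) n 0 1 = b01" "bb (F n x) n 0 2 = b02" "bb (F n x) n 1 2 = b12"
proof -
  have sub: "A0 \<subseteq> sigmaE n" "A1 \<subseteq> sigmaE n" "A2 \<subseteq> sigmaE n" using assms by (auto simp: D_def)
  have e: "bb A n i j = (bre n i j \<in> A)" for A i j by (simp add: bb_def bre_def)
  show "bb (F n x) n 0 1 = b01" "bb (F n x) n 0 2 = b02" "bb (F n x) n 1 2 = b12"
    unfolding e assms(1) using in_F[OF sub, of 0 1 b01 b02 b12] in_F[OF sub, of 0 2 b01 b02 b12]
      in_F[OF sub, of 1 2 b01 b02 b12] bre_ne bre_ne[THEN not_sym]
    by simp_all
qed

lemma F_sub: assumes "x \<in> D n" shows "F n x \<subseteq> sigmaE (Suc n)"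
proof -
  obtain A0 A1 A2 b01 b02 b12 where x: "x = (A0, A1, A2, b01, b02, b12)" by (cases x) auto
  have sub: "A0 \<subseteq> sigmaE n" "A1 \<subseteq> sigmaE n" "A2 \<subseteq> sigmaE n" using assms x by (auto simp: D_def)
  have "image (Cons i) ` B \<subseteq> sigmaE (Suc n)" if "B \<subseteq> sigmaE n" "i \<in> {0,1,2}" for i B
    using that unfolding sigmaE_Suc by blast
  moreover have "bre n 0 1 \<in> sigmaE (Suc n)" "bre n 0 2 \<in> sigmaE (Suc n)" "bre n 1 2 \<in> sigmaE (Suc n)"
    unfolding sigmaE_Suc br_def bre_def by auto
  ultimately show ?thesis unfolding x F_def using sub by auto
qed

definition G :: "nat \<Rightarrow> nat list set set \<Rightarrow> nat list set set \<times> nat list set set \<times> nat list set set \<times> bool \<times> bool \<times> bool" where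
  "G n A = (Ai A n 0, Ai A n 1, Ai A n 2, bb A n 0 1, bb A n 0 2, bb A n 1 2)"

lemma G_D: "G n A \<in> D n" by (auto simp: G_def D_def Ai_def)

lemma F_G: assumes "A \<subseteq> sigmaE (Suc n)" shows "F n (G n A) = A"
proof
  show "F n (G n A) \<subseteq> A" unfolding F_def G_def Ai_def bb_def bre_def by auto
  show "A \<subseteq> F n (G n A)"
  proof
    fix e assume "e \<in> A"
    then have "e \<in> sigmaE (Suc n)" using assms by auto
    then consider (int) i e' where "i \<in> {0,1,2}" "e' \<in> sigmaE n" "e = Cons i ` e'"
      | (b) "e \<in> br n" unfolding sigmaE_Suc by blast
    then show "e \<in> F n (G n A)"
    proof cases
      case int then show ?thesis using \<open>e \<in> A\<close> unfolding F_def G_def Ai_def by auto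
    next
      case b then show ?thesis using \<open>e \<in> A\<close> unfolding F_def G_def bb_def bre_def br_def by auto
    qed
  qed
qed

lemma G_F: assumes "x \<in> D n" shows "G n (F n x) = x"
proof -
  obtain A0 A1 A2 b01 b02 b12 where x: "x = (A0, A1, A2, b01, b02, b12)" by (cases x) auto
  show ?thesis using Ai_F[OF assms] bb_F[OF x assms] unfolding G_def x by simp
qed

lemma ty_F:
  assumes "x \<in> D n" "x = (A0, A1, A2, b01, b02, b12)"
  shows "ty (Suc n) (F n x) = combo (ty n A0) (ty n A1) (ty n A2) b01 b02 b12"
  using ty_Suc[OF F_sub[OF assms(1)]] Ai_F[OF assms(1)] bb_F[OF assms(2,1)] assms(2) by simp

definition cnt :: "nat \<Rightarrow> nat list option \<Rightarrow> nat" where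
  "cnt n t = card {A. A \<subseteq> sigmaE n \<and> ty n A = t}"

lemma fin_E: "finite (sigmaE n)"
  by (induction n) (auto simp: sigmaE_Suc br_def)

lemma cnt_D:
  "cnt (Suc n) t = card {x \<in> D n. ty (Suc n) (F n x) = t}"
proof -
  have inj: "inj_on (F n) (D n)" by (metis G_F inj_onI)
  have "F n ` {x \<in> D n. ty (Suc n) (F n x) = t} = {A. A \<subseteq> sigmaE (Suc n) \<and> ty (Suc n) A = t}"
  proof
    show "F n ` {x \<in> D n. ty (Suc n) (F n x) = t} \<subseteq> {A. A \<subseteq> sigmaE (Suc n) \<and> ty (Suc n) A = t}"
    proof (rule image_subsetI)
      fix x assume "x \<in> {x \<in> D n. ty (Suc n) (F n x) = t}"
      then show "F n x \<in> {A. A \<subseteq> sigmaE (Suc n) \<and> ty (Suc n) A = t}" using F_sub by simp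
    qed
    show "{A. A \<subseteq> sigmaE (Suc n) \<and> ty (Suc n) A = t} \<subseteq> F n ` {x \<in> D n. ty (Suc n) (F n x) = t}"
    proof
      fix A assume "A \<in> {A. A \<subseteq> sigmaE (Suc n) \<and> ty (Suc n) A = t}"
      then show "A \<in> F n ` {x \<in> D n. ty (Suc n) (F n x) = t}"
        using F_G G_D by (metis (mono_tags, lifting) image_eqI mem_Collect_eq)
    qed
  qed
  then show ?thesis unfolding cnt_def
    by (metis (no_types, lifting) inj inj_on_subset mem_Collect_eq subsetI card_image)
qed

definition OT :: "nat list option set" where
  "OT = insert None (Some ` {[0,0,0],[0,1,1],[0,1,0],[0,0,2],[0,1,2]})"

lemma ty_OT: "ty n A \<in> OT"
proof (cases "good n A")
  case False then show ?thesis by (simp add: ty_def OT_def)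
next
  case True
  let ?r = "\<lambda>a b. same_comp A (cor n a) (cor n b)"
  have "?r 0 1 \<Longrightarrow> ?r 1 2 \<Longrightarrow> ?r 0 2" by (rule sc_trans)
  then show ?thesis using True by (auto simp: ty_def OT_def canon_def)
qed

lemma fin_OT: "finite OT" by (simp add: OT_def)

lemma sum_fiber:
  fixes g :: "nat list option \<Rightarrow> nat"
  assumes "finite S" "\<forall>x\<in>S. ty n x \<in> OT"
  shows "(\<Sum>x\<in>S. g (ty n x)) = (\<Sum>t\<in>OT. card {x\<in>S. ty n x = t} * g t)"
proof -
  have sub: "ty n ` S \<subseteq> OT" using assms(2) by blast
  have "(\<Sum>x\<in>S. g (ty n x)) = (\<Sum>t\<in>OT. \<Sum>x\<in>{x. x \<in> S \<and> ty n x = t}. g (ty n x))"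
    by (rule sum.group[symmetric, OF assms(1) fin_OT sub])
  also have "\<dots> = (\<Sum>t\<in>OT. card {x\<in>S. ty n x = t} * g t)"
    by (intro sum.cong refl) simp
  finally show ?thesis .
qed

lemma cnt_Suc:
  "cnt (Suc n) s = (\<Sum>o0\<in>OT. \<Sum>o1\<in>OT. \<Sum>o2\<in>OT. cnt n o0 * (cnt n o1 * (cnt n o2 *
      (\<Sum>b01\<in>UNIV. \<Sum>b02\<in>UNIV. \<Sum>b12\<in>UNIV. if combo o0 o1 o2 b01 b02 b12 = s then 1 else 0))))"
(is "_ = ?R")
proof -
  let ?P = "Pow (sigmaE n)"
  have finP: "finite ?P" by (simp add: fin_E)
  have tyo: "\<forall>x\<in>?P. ty n x \<in> OT" using ty_OT by blast
  have cP: "card {x \<in> ?P. ty n x = t} = cnt n t" for t unfolding cnt_def by (metis Pow_iff)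
  have step: "(\<Sum>x\<in>?P. f (ty n x)) = (\<Sum>t\<in>OT. cnt n t * f t)" for f
    using sum_fiber[OF finP tyo, of f] cP by simp
  define g3 where "g3 o0 o1 o2 = (\<Sum>b01\<in>(UNIV::bool set). \<Sum>b02\<in>(UNIV::bool set). \<Sum>b12\<in>(UNIV::bool set).
      if combo o0 o1 o2 b01 b02 b12 = s then 1 else (0::nat))" for o0 o1 o2
  have "cnt (Suc n) s = (\<Sum>x\<in>D n. if ty (Suc n) (F n x) = s then 1 else 0)"
    unfolding cnt_D card_eq_sum by (rule sum.inter_filter) (simp add: D_def fin_E)
  also have "\<dots> = (\<Sum>A0\<in>?P. \<Sum>A1\<in>?P. \<Sum>A2\<in>?P. \<Sum>b01\<in>UNIV. \<Sum>b02\<in>UNIV. \<Sum>b12\<in>UNIV.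
        if combo (ty n A0) (ty n A1) (ty n A2) b01 b02 b12 = s then 1 else 0)"
    unfolding D_def sum.cartesian_product
    by (intro sum.cong refl) (auto simp: ty_F[unfolded D_def])
  also have "\<dots> = (\<Sum>A0\<in>?P. \<Sum>A1\<in>?P. \<Sum>A2\<in>?P. g3 (ty n A0) (ty n A1) (ty n A2))"
    unfolding g3_def ..
  also have "\<dots> = (\<Sum>o0\<in>OT. cnt n o0 * (\<Sum>A1\<in>?P. \<Sum>A2\<in>?P. g3 o0 (ty n A1) (ty n A2)))"
    by (rule step[of "\<lambda>o0. \<Sum>A1\<in>?P. \<Sum>A2\<in>?P. g3 o0 (ty n A1) (ty n A2)"])
  also have "\<dots> = (\<Sum>o0\<in>OT. cnt n o0 * (\<Sum>o1\<in>OT. cnt n o1 * (\<Sum>A2\<in>?P. g3 o0 o1 (ty n A2))))"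
    by (intro sum.cong refl arg_cong[where f = "\<lambda>z. _ * z"] step)
  also have "\<dots> = (\<Sum>o0\<in>OT. cnt n o0 * (\<Sum>o1\<in>OT. cnt n o1 * (\<Sum>o2\<in>OT. cnt n o2 * g3 o0 o1 o2)))"
    by (intro sum.cong refl arg_cong[where f = "\<lambda>z. _ * z"] step)
  also have "\<dots> = (\<Sum>o0\<in>OT. \<Sum>o1\<in>OT. \<Sum>o2\<in>OT. cnt n o0 * (cnt n o1 * (cnt n o2 * g3 o0 o1 o2)))"
    by (simp add: sum_distrib_left)
  also have "\<dots> = ?R" unfolding g3_def ..
  finally show ?thesis .
qed



definition rho :: "nat \<Rightarrow> nat" where
  "rho c = (if c = 0 then 1 else if c = 1 then 2 else if c = 2 then 0 else c)"

lemma rho3: "rho (rho (rho c)) = c" by (simp add: rho_def)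

lemma inj_rho: "inj rho" by (metis injI rho3)

lemma map_rho3: "map (rho \<circ> rho) (map rho u) = u"
  by (induction u) (simp_all add: rho3)

lemma map_rho3': "map (rho \<circ> rho \<circ> rho) u = u"
  by (induction u) (simp_all add: rho3)

lemma map_cor: "map f (cor n c) = cor n (f c)" by (simp add: cor_def)

lemma img_Cons: "map f ` (Cons i ` X) = Cons (f i) ` (map f ` X)" by (simp add: image_image)

lemma V_rot: "map rho ` sigmaV n = sigmaV n"
proof (induction n)
  case 0 then show ?case by simp
next
  case (Suc n)
  have "map rho ` sigmaV (Suc n) = Cons 1 ` (map rho ` sigmaV n) \<union> (Cons 2 ` (map rho ` sigmaV n) \<union> Cons 0 ` (map rho ` sigmaV n))"
    unfolding sigmaV_Suc by (simp add: image_Un img_Cons rho_def)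
  also have "\<dots> = sigmaV (Suc n)" unfolding Suc sigmaV_Suc by auto
  finally show ?case .
qed

lemma img_img_Cons: "image (map f) ` (image (Cons i) ` X) = image (Cons (f i)) ` (image (map f) ` X)"
proof -
  have "image (map f) (Cons i ` e) = Cons (f i) ` (map f ` e)" for e by (rule img_Cons)
  then show ?thesis by (simp add: image_image)
qed

lemma bre_rot: "image (map f) (bre n i j) = bre n (f i) (f j)"
  by (simp add: bre_def map_cor)

lemma br_bre: "br n = {bre n 0 1, bre n 0 2, bre n 1 2}" by (simp add: br_def bre_def)

lemma bre_sym: "bre n i j = bre n j i" by (simp add: bre_def insert_commute)

lemma E_rot: "image (map rho) ` sigmaE n = sigmaE n"
proof (induction n)
  case 0 then show ?case by simp
next
  case (Suc n)
  have b: "image (map rho) ` br n = br n"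
    unfolding br_bre by (simp add: bre_rot rho_def bre_sym insert_commute)
  have "image (map rho) ` sigmaE (Suc n) =
     image (Cons 1) ` (image (map rho) ` sigmaE n) \<union> (image (Cons 2) ` (image (map rho) ` sigmaE n)
       \<union> (image (Cons 0) ` (image (map rho) ` sigmaE n))) \<union> image (map rho) ` br n"
    unfolding sigmaE_Suc by (simp add: image_Un img_img_Cons rho_def)
  also have "\<dots> = sigmaE (Suc n)" unfolding Suc b sigmaE_Suc by auto
  finally show ?case .
qed

lemma sc_img: "same_comp A u v \<Longrightarrow> same_comp (image f ` A) (f u) (f v)"
  unfolding same_comp_def
proof (induction rule: rtrancl_induct)
  case base then show ?case by simp
next
  case (step y z)
  then have "{y, z} \<in> A" by (simp add: adj_iff)
  then have "{f y, f z} \<in> image f ` A" by (metis image_empty image_insert imageI)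
  then show ?case using step by (meson adj_iff rtrancl_into_rtrancl)
qed

definition rot :: "nat list set set \<Rightarrow> nat list set set" where
  "rot A = image (map rho) ` A"

lemma rot_back: "image (map (rho \<circ> rho)) ` rot A = A"
proof -
  have "image (map (rho \<circ> rho)) (image (map rho) e) = e" for e
    by (simp add: image_image map_rho3 map_rho3')
  then show ?thesis unfolding rot_def by (simp add: image_image)
qed

lemma sc_rot_iff: "same_comp (rot A) (map rho u) (map rho v) \<longleftrightarrow> same_comp A u v"
proof
  assume "same_comp (rot A) (map rho u) (map rho v)"
  from sc_img[OF this, of "map (rho \<circ> rho)"] show "same_comp A u v"
    unfolding rot_back map_rho3 .
qed (simp add: rot_def sc_img)

lemma sc_rot_cor: "same_comp (rot A) (cor n (rho a)) (cor n (rho b)) \<longleftrightarrow> same_comp A (cor n a) (cor n b)"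
  using sc_rot_iff[of A "cor n a" "cor n b"] by (simp add: map_cor)

lemma good_rot: "good n A \<Longrightarrow> good n (rot A)"
  unfolding good_def
proof
  fix v assume g: "\<forall>v\<in>sigmaV n. \<exists>c<3. same_comp A (cor n c) v" and v: "v \<in> sigmaV n"
  then obtain u where u: "u \<in> sigmaV n" "v = map rho u" using V_rot by (metis imageE)
  then obtain c where "c < 3" "same_comp A (cor n c) u" using g by blast
  then have "same_comp (rot A) (cor n (rho c)) v" using sc_rot_iff u by (metis map_cor)
  moreover have "rho c < 3" using \<open>c < 3\<close> by (simp add: rho_def)
  ultimately show "\<exists>c<3. same_comp (rot A) (cor n c) v" by blast
qed

lemma rot_sub: "A \<subseteq> sigmaE n \<Longrightarrow> rot A \<subseteq> sigmaE n"
  using E_rot unfolding rot_def by blast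

lemma inj_rot: "inj rot"
proof (rule injI)
  fix A B assume "rot A = rot B"
  then show "A = B" by (metis rot_back)
qed

lemma ty_Some_iff: "ty n A = Some t \<longleftrightarrow> good n A \<and> canon (same_comp A (cor n 0) (cor n 1))
       (same_comp A (cor n 0) (cor n 2)) (same_comp A (cor n 1) (cor n 2)) = t"
  by (auto simp: ty_def)

lemma rho_vals: "rho 0 = 1" "rho 1 = 2" "rho 2 = 0" by (simp_all add: rho_def)

lemma cnt_le:
  assumes "\<And>A. A \<subseteq> sigmaE n \<Longrightarrow> ty n A = Some X \<Longrightarrow> ty n (rot A) = Some Y"
  shows "cnt n (Some X) \<le> cnt n (Some Y)"
  unfolding cnt_def
proof (rule card_inj_on_le)
  show "inj_on rot {A. A \<subseteq> sigmaE n \<and> ty n A = Some X}" using inj_rot by (simp add: inj_on_def inj_def)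
  show "rot ` {A. A \<subseteq> sigmaE n \<and> ty n A = Some X} \<subseteq> {A. A \<subseteq> sigmaE n \<and> ty n A = Some Y}"
    using assms rot_sub by blast
  show "finite {A. A \<subseteq> sigmaE n \<and> ty n A = Some Y}" using fin_E by simp
qed

lemma cnt_sym: "cnt n (Some [0,1,0]) = cnt n (Some [0,1,1])" "cnt n (Some [0,0,2]) = cnt n (Some [0,1,1])"
proof -
  have r: "same_comp (rot A) (cor n 1) (cor n 2) = same_comp A (cor n 0) (cor n 1)"
          "same_comp (rot A) (cor n 2) (cor n 0) = same_comp A (cor n 1) (cor n 2)"
          "same_comp (rot A) (cor n 0) (cor n 1) = same_comp A (cor n 2) (cor n 0)" for A
    using sc_rot_cor[of A n 0 1] sc_rot_cor[of A n 1 2] sc_rot_cor[of A n 2 0] by (simp_all add: rho_def)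
  have s: "same_comp B (cor n a) (cor n b) = same_comp B (cor n b) (cor n a)" for B a b
    by (rule iffI; erule sc_sym)
  have t: "same_comp B (cor n a) (cor n b) \<Longrightarrow> same_comp B (cor n b) (cor n c) \<Longrightarrow> same_comp B (cor n a) (cor n c)"
    for B a b c by (rule sc_trans)
  have XY: "cnt n (Some [0,1,1]) \<le> cnt n (Some [0,1,0])"
  proof (rule cnt_le)
    fix A assume "ty n A = Some [0,1,1]"
    then show "ty n (rot A) = Some [0,1,0]" unfolding ty_Some_iff
      using good_rot r[of A] s[of A] s[of "rot A"] by (auto simp: canon_def)
  qed
  have YZ: "cnt n (Some [0,1,0]) \<le> cnt n (Some [0,0,2])"
  proof (rule cnt_le)
    fix A assume "ty n A = Some [0,1,0]"
    then show "ty n (rot A) = Some [0,0,2]" unfolding ty_Some_iff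
      using good_rot r[of A] s[of A] s[of "rot A"] t[of A 1 2 0] by (auto simp: canon_def)
  qed
  have ZX: "cnt n (Some [0,0,2]) \<le> cnt n (Some [0,1,1])"
  proof (rule cnt_le)
    fix A assume "ty n A = Some [0,0,2]"
    then show "ty n (rot A) = Some [0,1,1]" unfolding ty_Some_iff
      using good_rot r[of A] s[of A] s[of "rot A"] by (auto simp: canon_def)
  qed
  show "cnt n (Some [0,1,0]) = cnt n (Some [0,1,1])" "cnt n (Some [0,0,2]) = cnt n (Some [0,1,1])"
    using XY YZ ZX by linarith+
qed

lemma Ai_full: "i \<in> {0,1,2} \<Longrightarrow> Ai (sigmaE (Suc n)) n i = sigmaE n"
  unfolding Ai_def sigmaE_Suc by blast

lemma bb_full: "bb (sigmaE (Suc n)) n 0 1" "bb (sigmaE (Suc n)) n 0 2" "bb (sigmaE (Suc n)) n 1 2"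
  unfolding bb_def sigmaE_Suc br_def by auto

lemma ty_full: "ty n (sigmaE n) = Some [0,0,0]"
proof (induction n)
  case 0
  have "good 0 (sigmaE 0)" unfolding good_def cor_def by (auto intro: exI[of _ 0])
  then show ?case by (simp add: ty_def cor_def canon_def)
next
  case (Suc n)
  have "ty (Suc n) (sigmaE (Suc n)) = combo (Some [0,0,0]) (Some [0,0,0]) (Some [0,0,0]) True True True"
    using ty_Suc[of "sigmaE (Suc n)" n] Suc Ai_full bb_full by simp
  also have "\<dots> = Some [0,0,0]"
    by (simp add: combo_def comb_def Lfin_def mg_def merge_def L0_def smallv_def canon_def)
  finally show ?case .
qed



definition Rel :: "'a set \<Rightarrow> 'a set set \<Rightarrow> ('a \<times> 'a) set" where
  "Rel V A = {(u, v). u \<in> V \<and> v \<in> V \<and> (u, v) \<in> (adj A)\<^sup>*}"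

lemma ncomp_img: "ncomp V A = card ((\<lambda>v. Rel V A `` {v}) ` V)"
  unfolding ncomp_def Rel_def[symmetric] quotient_def by (simp add: UNION_singleton_eq_range)

lemma cls_eq:
  assumes "u \<in> V" "v \<in> V"
  shows "Rel V A `` {u} = Rel V A `` {v} \<longleftrightarrow> same_comp A u v"
proof
  assume "Rel V A `` {u} = Rel V A `` {v}"
  then have "v \<in> Rel V A `` {u}" using assms by (auto simp: Rel_def)
  then show "same_comp A u v" by (simp add: Rel_def same_comp_def)
next
  assume h: "same_comp A u v"
  show "Rel V A `` {u} = Rel V A `` {v}"
  proof (rule set_eqI)
    fix w
    have "same_comp A u w \<longleftrightarrow> same_comp A v w" using h sc_sym sc_trans by metis
    then show "w \<in> Rel V A `` {u} \<longleftrightarrow> w \<in> Rel V A `` {v}" using assms by (simp add: Rel_def same_comp_def)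
  qed
qed

lemma ncomp_le_card: "finite V \<Longrightarrow> ncomp V A \<le> card V"
  unfolding ncomp_img by (rule card_image_le)

lemma cover:
  assumes fin: "finite V" and Os: "Os \<subseteq> V" and pw: "\<forall>p\<in>Os. \<forall>q\<in>Os. same_comp A p q \<longrightarrow> p = q"
  shows "card Os \<le> ncomp V A" "ncomp V A \<le> card Os \<longleftrightarrow> (\<forall>v\<in>V. \<exists>p\<in>Os. same_comp A p v)"
proof -
  let ?c = "\<lambda>v. Rel V A `` {v}"
  have finO: "finite Os" using fin Os finite_subset by blast
  have inj: "inj_on ?c Os"
    using cls_eq Os pw by (smt (verit, best) inj_onI subsetD)
  have sub: "?c ` Os \<subseteq> ?c ` V" using Os by blast
  have cO: "card (?c ` Os) = card Os" using card_image[OF inj] .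
  show "card Os \<le> ncomp V A" unfolding ncomp_img
    using card_mono[OF finite_imageI[OF fin] sub] cO by simp
  show "ncomp V A \<le> card Os \<longleftrightarrow> (\<forall>v\<in>V. \<exists>p\<in>Os. same_comp A p v)"
  proof
    assume le: "ncomp V A \<le> card Os"
    show "\<forall>v\<in>V. \<exists>p\<in>Os. same_comp A p v"
    proof (rule ccontr)
      assume "\<not> (\<forall>v\<in>V. \<exists>p\<in>Os. same_comp A p v)"
      then obtain v where v: "v \<in> V" "\<forall>p\<in>Os. \<not> same_comp A p v" by blast
      have "?c v \<notin> ?c ` Os"
      proof
        assume "?c v \<in> ?c ` Os"
        then obtain p where "p \<in> Os" "?c v = ?c p" by blast
        then have "same_comp A p v" using cls_eq[of p V v A] Os v(1) by auto
        then show False using v \<open>p \<in> Os\<close> by blast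
      qed
      moreover have "insert (?c v) (?c ` Os) \<subseteq> ?c ` V" using sub v by blast
      ultimately have "card (insert (?c v) (?c ` Os)) \<le> ncomp V A" unfolding ncomp_img
        by (intro card_mono finite_imageI fin)
      then have "Suc (card Os) \<le> ncomp V A" using cO finO \<open>?c v \<notin> ?c ` Os\<close> by simp
      then show False using le by simp
    qed
  next
    assume h: "\<forall>v\<in>V. \<exists>p\<in>Os. same_comp A p v"
    have "?c ` V \<subseteq> ?c ` Os"
    proof
      fix x assume "x \<in> ?c ` V"
      then obtain v where "v \<in> V" "x = ?c v" by blast
      then obtain p where "p \<in> Os" "same_comp A p v" using h by blast
      then have "x = ?c p" using cls_eq[of p V v A] Os \<open>v \<in> V\<close> \<open>x = ?c v\<close> by auto
      then show "x \<in> ?c ` Os" using \<open>p \<in> Os\<close> by blast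
    qed
    then show "ncomp V A \<le> card Os" unfolding ncomp_img
      using card_mono[OF finite_imageI[OF finO]] cO by metis
  qed
qed

lemma canon_000: "canon a b c = [0,0,0] \<longleftrightarrow> a \<and> b" by (simp add: canon_def)
lemma canon_011: "canon a b c = [0,1,1] \<longleftrightarrow> \<not> a \<and> \<not> b \<and> c" by (simp add: canon_def)
lemma canon_012: "canon a b c = [0,1,2] \<longleftrightarrow> \<not> a \<and> \<not> b \<and> \<not> c" by (simp add: canon_def)

lemma fin_V: "finite (sigmaV n)"
  by (induction n) (auto simp: sigmaV_Suc)

lemma V_ne: "sigmaV n \<noteq> {}" using cor_in[of 0 n] by auto

abbreviation "tt n \<equiv> cor n 0"
abbreviation "ll n \<equiv> cor n 1"
abbreviation "rr n \<equiv> cor n 2"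

lemma k_ge1: "1 \<le> ncomp (sigmaV n) A"
  using cover(1)[OF fin_V[of n], of "{tt n}" A] cor_in[of 0 n] by auto

lemma k1_iff: "ncomp (sigmaV n) A = 1 \<longleftrightarrow> (\<forall>v\<in>sigmaV n. same_comp A (tt n) v)"
  using cover(2)[OF fin_V[of n], of "{tt n}" A] cor_in[of 0 n] k_ge1[of n A] by auto

lemma ty_000: "ty n A = Some [0,0,0] \<longleftrightarrow> (\<forall>v\<in>sigmaV n. same_comp A (tt n) v)"
proof
  assume "ty n A = Some [0,0,0]"
  then have g: "good n A" and r: "same_comp A (tt n) (ll n)" "same_comp A (tt n) (rr n)"
    unfolding ty_Some_iff canon_000 by blast+
  show "\<forall>v\<in>sigmaV n. same_comp A (tt n) v"
  proof
    fix v assume "v \<in> sigmaV n"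
    then obtain c where "c < 3" "same_comp A (cor n c) v" using g by (auto simp: good_def)
    moreover have "same_comp A (tt n) (cor n c)" using \<open>c < 3\<close> r unfolding lt3 by auto
    ultimately show "same_comp A (tt n) v" by (meson sc_trans)
  qed
next
  assume h: "\<forall>v\<in>sigmaV n. same_comp A (tt n) v"
  then have g: "good n A" unfolding good_def by (auto intro: exI[of _ 0])
  have r: "same_comp A (tt n) (ll n)" "same_comp A (tt n) (rr n)" using h cor_in by auto
  then have "same_comp A (ll n) (rr n)" by (meson sc_sym sc_trans)
  then show "ty n A = Some [0,0,0]" using g r by (simp add: ty_def canon_def)
qed

lemma ty_011:
  assumes "same_comp A (ll n) (rr n)" "\<not> same_comp A (tt n) (ll n)"
  shows "ncomp (sigmaV n) A \<le> 2 \<longleftrightarrow> ty n A = Some [0,1,1]"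
proof -
  have ne: "tt n \<noteq> ll n" using assms(2) by auto
  have s1: "\<not> same_comp A (ll n) (tt n)" using assms(2) sc_sym by metis
  have pw: "\<forall>p\<in>{tt n, ll n}. \<forall>q\<in>{tt n, ll n}. same_comp A p q \<longrightarrow> p = q"
    using assms(2) s1 by simp
  have "ncomp (sigmaV n) A \<le> 2 \<longleftrightarrow> (\<forall>v\<in>sigmaV n. same_comp A (tt n) v \<or> same_comp A (ll n) v)"
    using cover(2)[OF fin_V[of n] _ pw] cor_in ne by auto
  also have "\<dots> \<longleftrightarrow> good n A"
  proof
    assume h: "\<forall>v\<in>sigmaV n. same_comp A (tt n) v \<or> same_comp A (ll n) v"
    show "good n A" unfolding good_def
    proof
      fix v assume "v \<in> sigmaV n"
      then have "same_comp A (cor n 0) v \<or> same_comp A (cor n 1) v" using h by blast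
      then show "\<exists>c<3. same_comp A (cor n c) v" unfolding ex3 by blast
    qed
  next
    assume "good n A"
    show "\<forall>v\<in>sigmaV n. same_comp A (tt n) v \<or> same_comp A (ll n) v"
    proof
      fix v assume "v \<in> sigmaV n"
      then obtain c where "c < 3" "same_comp A (cor n c) v" using \<open>good n A\<close> by (auto simp: good_def)
      then show "same_comp A (tt n) v \<or> same_comp A (ll n) v" using assms(1)
        unfolding lt3 by (metis sc_trans)
    qed
  qed
  also have "\<dots> \<longleftrightarrow> ty n A = Some [0,1,1]"
  proof -
    have "\<not> same_comp A (tt n) (rr n)" using assms sc_sym sc_trans by metis
    then show ?thesis using assms by (simp add: ty_def canon_def)
  qed
  finally show ?thesis .
qed

lemma ty_012:
  assumes "\<not> same_comp A (ll n) (rr n)" "\<not> same_comp A (tt n) (ll n)" "\<not> same_comp A (tt n) (rr n)"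
  shows "ncomp (sigmaV n) A \<le> 3 \<longleftrightarrow> ty n A = Some [0,1,2]"
proof -
  have ne: "tt n \<noteq> ll n" "tt n \<noteq> rr n" "ll n \<noteq> rr n" using assms by auto
  have s1: "\<not> same_comp A (ll n) (tt n)" "\<not> same_comp A (rr n) (tt n)" "\<not> same_comp A (rr n) (ll n)"
    using assms sc_sym by metis+
  have pw: "\<forall>p\<in>{tt n, ll n, rr n}. \<forall>q\<in>{tt n, ll n, rr n}. same_comp A p q \<longrightarrow> p = q"
    using assms s1 by simp
  have "ncomp (sigmaV n) A \<le> 3 \<longleftrightarrow> (\<forall>v\<in>sigmaV n. same_comp A (tt n) v \<or> same_comp A (ll n) v \<or> same_comp A (rr n) v)"
    using cover(2)[OF fin_V[of n] _ pw] cor_in ne by auto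
  also have "\<dots> \<longleftrightarrow> good n A"
    unfolding good_def ex3 ..
  also have "\<dots> \<longleftrightarrow> ty n A = Some [0,1,2]"
    using assms by (simp add: ty_def canon_def)
  finally show ?thesis .
qed

lemma kE: "ncomp (sigmaV n) (sigmaE n) = 1"
  using k1_iff ty_000 ty_full by blast

lemma rk_diff: "rk (sigmaV n) (sigmaE n) - rk (sigmaV n) A = ncomp (sigmaV n) A - 1"
  using kE ncomp_le_card[OF fin_V, of n A] k_ge1[of n A] unfolding rk_def by simp

lemma sum_ind: "finite S \<Longrightarrow> (\<Sum>A\<in>S. if P A then 1 else 0 :: real) = real (card {A\<in>S. P A})"
  by (simp add: sum.inter_filter[symmetric])

lemma finPE: "finite {A. A \<subseteq> sigmaE n \<and> P A}" using fin_E by simp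

lemma Hn_eq: "Hn n 1 2 = real (card {A. A \<subseteq> sigmaE n \<and> ncomp (sigmaV n) A = 1})"
proof -
  have "Hn n 1 2 = (\<Sum>A\<in>Pow (sigmaE n). if ncomp (sigmaV n) A = 1 then 1 else 0)"
    unfolding Hn_def tutte_def
  proof (intro sum.cong refl)
    fix A
    have "ncomp (sigmaV n) A - 1 = 0 \<longleftrightarrow> ncomp (sigmaV n) A = 1" using k_ge1[of n A] by linarith
    then show "(1 - 1 :: real) ^ (rk (sigmaV n) (sigmaE n) - rk (sigmaV n) A) * (2 - 1) ^ nullity (sigmaV n) A =
       (if ncomp (sigmaV n) A = 1 then 1 else 0)" unfolding rk_diff using k_ge1[of n A] by simp
  qed
  also have "\<dots> = real (card {A. A \<subseteq> sigmaE n \<and> ncomp (sigmaV n) A = 1})"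
    using sum_ind[of "Pow (sigmaE n)"] fin_E by (simp add: Pow_def)
  finally show ?thesis .
qed

lemma card_k1: "card {A. A \<subseteq> sigmaE n \<and> ncomp (sigmaV n) A = 1} = cnt n (Some [0,0,0])"
  unfolding cnt_def k1_iff ty_000 ..

lemma H2_eq: "H2 n 1 2 = real (cnt n (Some [0,0,0]))"
proof -
  let ?S = "{A. A \<subseteq> sigmaE n \<and> same_comp A (topv n) (leftv n) \<and> same_comp A (topv n) (rightv n)}"
  have "H2 n 1 2 = (\<Sum>A\<in>?S. if ncomp (sigmaV n) A = 1 then 1 else 0)"
    unfolding H2_def weight_def
  proof (intro sum.cong refl)
    fix A
    have "ncomp (sigmaV n) A - 1 = 0 \<longleftrightarrow> ncomp (sigmaV n) A = 1" using k_ge1[of n A] by linarith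
    then show "(1 - 1 :: real) ^ (rk (sigmaV n) (sigmaE n) - rk (sigmaV n) A) * (2 - 1) ^ nullity (sigmaV n) A =
       (if ncomp (sigmaV n) A = 1 then 1 else 0)" unfolding rk_diff using k_ge1[of n A] by simp
  qed
  also have "\<dots> = real (card {A \<in> ?S. ncomp (sigmaV n) A = 1})"
    by (rule sum_ind) (simp add: fin_E)
  also have "{A \<in> ?S. ncomp (sigmaV n) A = 1} = {A. A \<subseteq> sigmaE n \<and> ncomp (sigmaV n) A = 1}"
    unfolding k1_iff topv_def leftv_def rightv_def cor_def[symmetric] using cor_in by auto
  finally show ?thesis using card_k1 by simp
qed

lemma Nn_eq: "Nn n 1 2 = real (cnt n (Some [0,1,1]))"
proof -
  let ?S = "{A. A \<subseteq> sigmaE n \<and> same_comp A (leftv n) (rightv n) \<and> \<not> same_comp A (topv n) (leftv n)}"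
  have "Nn n 1 2 = (\<Sum>A\<in>?S. if ncomp (sigmaV n) A \<le> 2 then 1 else 0)"
    unfolding Nn_def
  proof (intro sum.cong refl)
    fix A
    have "ncomp (sigmaV n) A - 1 - 1 = 0 \<longleftrightarrow> ncomp (sigmaV n) A \<le> 2" by linarith
    then show "(1 - 1 :: real) ^ (rk (sigmaV n) (sigmaE n) - rk (sigmaV n) A - 1) * (2 - 1) ^ nullity (sigmaV n) A =
       (if ncomp (sigmaV n) A \<le> 2 then 1 else 0)" unfolding rk_diff by simp
  qed
  also have "\<dots> = real (card {A \<in> ?S. ncomp (sigmaV n) A \<le> 2})"
    by (rule sum_ind) (simp add: fin_E)
  also have "{A \<in> ?S. ncomp (sigmaV n) A \<le> 2} = {A. A \<subseteq> sigmaE n \<and> ty n A = Some [0,1,1]}"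
  proof -
    have "ty n A = Some [0,1,1] \<Longrightarrow> same_comp A (ll n) (rr n) \<and> \<not> same_comp A (tt n) (ll n)" for A
      unfolding ty_Some_iff canon_011 by blast
    then show ?thesis unfolding topv_def leftv_def rightv_def cor_def[symmetric] using ty_011 by blast
  qed
  finally show ?thesis unfolding cnt_def by simp
qed

lemma Mn_eq: "Mn n 1 2 = real (cnt n (Some [0,1,2]))"
proof -
  let ?S = "{A. A \<subseteq> sigmaE n \<and> \<not> same_comp A (leftv n) (rightv n)
                 \<and> \<not> same_comp A (topv n) (leftv n) \<and> \<not> same_comp A (topv n) (rightv n)}"
  have "Mn n 1 2 = (\<Sum>A\<in>?S. if ncomp (sigmaV n) A \<le> 3 then 1 else 0)"
    unfolding Mn_def
  proof (intro sum.cong refl)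
    fix A
    have "ncomp (sigmaV n) A - 1 - 2 = 0 \<longleftrightarrow> ncomp (sigmaV n) A \<le> 3" by linarith
    then show "(1 - 1 :: real) ^ (rk (sigmaV n) (sigmaE n) - rk (sigmaV n) A - 2) * (2 - 1) ^ nullity (sigmaV n) A =
       (if ncomp (sigmaV n) A \<le> 3 then 1 else 0)" unfolding rk_diff by simp
  qed
  also have "\<dots> = real (card {A \<in> ?S. ncomp (sigmaV n) A \<le> 3})"
    by (rule sum_ind) (simp add: fin_E)
  also have "{A \<in> ?S. ncomp (sigmaV n) A \<le> 3} = {A. A \<subseteq> sigmaE n \<and> ty n A = Some [0,1,2]}"
  proof -
    have "ty n A = Some [0,1,2] \<Longrightarrow> \<not> same_comp A (ll n) (rr n) \<and> \<not> same_comp A (tt n) (ll n) \<and> \<not> same_comp A (tt n) (rr n)" for A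
      unfolding ty_Some_iff canon_012 by blast
    then show ?thesis unfolding topv_def leftv_def rightv_def cor_def[symmetric] using ty_012 by blast
  qed
  finally show ?thesis unfolding cnt_def by simp
qed



definition T5 :: "nat list set" where "T5 = {[0,0,0],[0,1,1],[0,1,0],[0,0,2],[0,1,2]}"

lemma OT_sum: "(\<Sum>x\<in>OT. f x) = f None + (\<Sum>t\<in>T5. f (Some t))"
proof -
  have "(\<Sum>x\<in>OT. f x) = f None + (\<Sum>x\<in>Some ` T5. f x)"
    unfolding OT_def T5_def[symmetric] by (simp add: T5_def)
  also have "(\<Sum>x\<in>Some ` T5. f x) = (\<Sum>t\<in>T5. f (Some t))"
    by (simp add: sum.reindex)
  finally show ?thesis .
qed

lemma combo_None: "combo None a b x y z = None" "combo a None b x y z = None" "combo a b None x y z = None"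
  by (simp_all add: combo_def split: option.splits)

lemma combo_Some: "combo (Some a) (Some b) (Some c) x y z = comb [a, b, c] x y z"
  by (simp add: combo_def)

lemmas evsimps = T5_def comb_def Lfin_def mg_def merge_def L0_def smallv_def canon_def UNIV_bool

lemma eval0:
  fixes c :: "nat list option \<Rightarrow> nat"
  assumes "c (Some [0,0,0]) = H" "c (Some [0,1,1]) = N" "c (Some [0,1,0]) = N" "c (Some [0,0,2]) = N" "c (Some [0,1,2]) = M"
  shows "(\<Sum>o0\<in>OT. \<Sum>o1\<in>OT. \<Sum>o2\<in>OT. c o0 * (c o1 * (c o2 *
      (\<Sum>b01\<in>UNIV. \<Sum>b02\<in>UNIV. \<Sum>b12\<in>UNIV. if combo o0 o1 o2 b01 b02 b12 = Some [0,0,0] then 1 else 0))))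
    = 4 * H ^ 3 + 6 * H ^ 2 * N"
  apply (simp only: OT_sum combo_None combo_Some option.distinct if_False sum.neutral_const mult_0_right add_0 add_0_right)
  apply (simp add: evsimps assms assms[unfolded One_nat_def])
  apply (simp add: algebra_simps power3_eq_cube power2_eq_square)
  done


lemma eval1:
  fixes c :: "nat list option \<Rightarrow> nat"
  assumes "c (Some [0,0,0]) = H" "c (Some [0,1,1]) = N" "c (Some [0,1,0]) = N" "c (Some [0,0,2]) = N" "c (Some [0,1,2]) = M"
  shows "(\<Sum>o0\<in>OT. \<Sum>o1\<in>OT. \<Sum>o2\<in>OT. c o0 * (c o1 * (c o2 *
      (\<Sum>b01\<in>UNIV. \<Sum>b02\<in>UNIV. \<Sum>b12\<in>UNIV. if combo o0 o1 o2 b01 b02 b12 = Some [0,1,1] then 1 else 0))))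
    = H ^ 3 + 8 * H ^ 2 * N + H ^ 2 * M + 7 * H * N ^ 2"
  apply (simp only: OT_sum combo_None combo_Some option.distinct if_False sum.neutral_const mult_0_right add_0 add_0_right)
  apply (simp add: evsimps assms assms[unfolded One_nat_def])
  apply (simp add: algebra_simps power3_eq_cube power2_eq_square)
  done

lemma eval2:
  fixes c :: "nat list option \<Rightarrow> nat"
  assumes "c (Some [0,0,0]) = H" "c (Some [0,1,1]) = N" "c (Some [0,1,0]) = N" "c (Some [0,0,2]) = N" "c (Some [0,1,2]) = M"
  shows "(\<Sum>o0\<in>OT. \<Sum>o1\<in>OT. \<Sum>o2\<in>OT. c o0 * (c o1 * (c o2 *
      (\<Sum>b01\<in>UNIV. \<Sum>b02\<in>UNIV. \<Sum>b12\<in>UNIV. if combo o0 o1 o2 b01 b02 b12 = Some [0,1,2] then 1 else 0))))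
    = H ^ 3 + 12 * H ^ 2 * N + 3 * H ^ 2 * M + 39 * H * N ^ 2 + 12 * H * N * M + 14 * N ^ 3"
  apply (simp only: OT_sum combo_None combo_Some option.distinct if_False sum.neutral_const mult_0_right add_0 add_0_right)
  apply (simp add: evsimps assms assms[unfolded One_nat_def])
  apply (simp add: algebra_simps power3_eq_cube power2_eq_square)
  done

lemma cnt_vals:
  "cnt n (Some [0,1,0]) = cnt n (Some [0,1,1])" "cnt n (Some [0,0,2]) = cnt n (Some [0,1,1])"
  by (rule cnt_sym)+

lemma rec0: "cnt (Suc n) (Some [0,0,0]) = 4 * cnt n (Some [0,0,0]) ^ 3 + 6 * cnt n (Some [0,0,0]) ^ 2 * cnt n (Some [0,1,1])"
  unfolding cnt_Suc by (rule eval0) (simp_all add: cnt_vals cnt_vals[unfolded One_nat_def])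

lemma rec1: "cnt (Suc n) (Some [0,1,1]) = cnt n (Some [0,0,0]) ^ 3 + 8 * cnt n (Some [0,0,0]) ^ 2 * cnt n (Some [0,1,1])
   + cnt n (Some [0,0,0]) ^ 2 * cnt n (Some [0,1,2]) + 7 * cnt n (Some [0,0,0]) * cnt n (Some [0,1,1]) ^ 2"
  unfolding cnt_Suc by (rule eval1) (simp_all add: cnt_vals cnt_vals[unfolded One_nat_def])

lemma rec2: "cnt (Suc n) (Some [0,1,2]) = cnt n (Some [0,0,0]) ^ 3 + 12 * cnt n (Some [0,0,0]) ^ 2 * cnt n (Some [0,1,1])
   + 3 * cnt n (Some [0,0,0]) ^ 2 * cnt n (Some [0,1,2]) + 39 * cnt n (Some [0,0,0]) * cnt n (Some [0,1,1]) ^ 2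
   + 12 * cnt n (Some [0,0,0]) * cnt n (Some [0,1,1]) * cnt n (Some [0,1,2]) + 14 * cnt n (Some [0,1,1]) ^ 3"
  unfolding cnt_Suc by (rule eval2) (simp_all add: cnt_vals cnt_vals[unfolded One_nat_def])

lemma cnt0: "cnt 0 t = (if t = Some [0,0,0] then 1 else 0)"
proof -
  have "ty 0 {} = Some [0,0,0]" using ty_full[of 0] by simp
  then have "{A. A \<subseteq> sigmaE 0 \<and> ty 0 A = t} = (if t = Some [0,0,0] then {{}} else {})" by auto
  then show ?thesis unfolding cnt_def by simp
qed

theorem proposition4p8:
  shows "(\<forall>n\<ge>1. real (card {A. A \<subseteq> sigmaE n \<and> ncomp (sigmaV n) A = 1}) = Hn n 1 2
              \<and> Hn n 1 2 = H2 n 1 2)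
    \<and> (\<forall>n\<ge>1.
         H2 (Suc n) 1 2 = 4 * H2 n 1 2 ^ 3 + 6 * H2 n 1 2 ^ 2 * Nn n 1 2
       \<and> Nn (Suc n) 1 2 = H2 n 1 2 ^ 3 + 8 * H2 n 1 2 ^ 2 * Nn n 1 2
             + H2 n 1 2 ^ 2 * Mn n 1 2 + 7 * H2 n 1 2 * Nn n 1 2 ^ 2
       \<and> Mn (Suc n) 1 2 = H2 n 1 2 ^ 3 + 12 * H2 n 1 2 ^ 2 * Nn n 1 2
             + 3 * H2 n 1 2 ^ 2 * Mn n 1 2 + 39 * H2 n 1 2 * Nn n 1 2 ^ 2
             + 12 * H2 n 1 2 * Nn n 1 2 * Mn n 1 2 + 14 * Nn n 1 2 ^ 3)
    \<and> H2 1 1 2 = 4 \<and> Nn 1 1 2 = 1 \<and> Mn 1 1 2 = 1"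
proof (intro conjI allI impI)
  fix n :: nat
  show "real (card {A. A \<subseteq> sigmaE n \<and> ncomp (sigmaV n) A = 1}) = Hn n 1 2" by (simp add: Hn_eq)
  show "Hn n 1 2 = H2 n 1 2" by (simp only: Hn_eq H2_eq card_k1)
  show "H2 (Suc n) 1 2 = 4 * H2 n 1 2 ^ 3 + 6 * H2 n 1 2 ^ 2 * Nn n 1 2"
    unfolding H2_eq Nn_eq rec0 by simp
  show "Nn (Suc n) 1 2 = H2 n 1 2 ^ 3 + 8 * H2 n 1 2 ^ 2 * Nn n 1 2
             + H2 n 1 2 ^ 2 * Mn n 1 2 + 7 * H2 n 1 2 * Nn n 1 2 ^ 2"
    unfolding H2_eq Nn_eq Mn_eq rec1 by simp
  show "Mn (Suc n) 1 2 = H2 n 1 2 ^ 3 + 12 * H2 n 1 2 ^ 2 * Nn n 1 2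
             + 3 * H2 n 1 2 ^ 2 * Mn n 1 2 + 39 * H2 n 1 2 * Nn n 1 2 ^ 2
             + 12 * H2 n 1 2 * Nn n 1 2 * Mn n 1 2 + 14 * Nn n 1 2 ^ 3"
    unfolding H2_eq Nn_eq Mn_eq rec2 by simp
next
  show "H2 1 1 2 = 4" using H2_eq[of 1] rec0[of 0] by (simp add: cnt0)
  show "Nn 1 1 2 = 1" using Nn_eq[of 1] rec1[of 0] by (simp add: cnt0)
  show "Mn 1 1 2 = 1" using Mn_eq[of 1] rec2[of 0] by (simp add: cnt0)
qed


end
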